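(* Let $\lambda_1,\dots,\lambda_n$ be ordinals with $\operatorname{cf}(\lambda_i)\neq\omega$ for all $i$, and put $X=\lambda_1\times\cdots\times\lambda_n$ (product of order topologies). For every finite partition $\mathcal A$ of $X$ into clopen sets there are finite subsets $F_i\subseteq\lambda_i$ ($i=1,\dots,n$) such that the grid partition $\mathcal G^X_{\{F_i\}_{i=1}^n}$ is a refinement of $\mathcal A$.
   Context: For an ordinal $\lambda$ and a finite subset $F=\{x_1<\cdots<x_N\}\subseteq\lambda$, the grid partition of $\lambda$ with respect to $F$ is $\mathcal G^\lambda_F=\{[0,x_1]\}\cup\{[x_j+1,x_{j+1}]\mid j=1,\dots,N-1\}\cup\{[x_N+1,\cdot)\}$, where $[\alpha,\beta]=\{x\in\lambda\mid\alpha\leq x\leq\beta\}$ and $[\alpha,\cdot)=\{x\in\lambda\mid\alpha\leq x\}$ (for $F=\emptyset$ it is $\{\lambda\}$). For finite $F_i\subseteq\lambda_i$, the grid partition of $X$ is $\mathcal G^X_{\{F_i\}}=\{\prod_{i=1}^nU_i\mid U_i\in\mathcal G^{\lambda_i}_{F_i}\}$. A family $\mathcal G$ refines $\mathcal A$ if every member of $\mathcal G$ is contained in some member of $\mathcal A$. *)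

theory Defs
  imports "HOL-Analysis.Analysis"
begin

text \<open>Ordinals are modelled as initial segments (down-closed subsets) of a well-ordered type.\<close>

definition ordinal_segment :: "'a::wellorder set \<Rightarrow> bool" where
  "ordinal_segment L \<longleftrightarrow> (\<forall>x y. x \<in> L \<longrightarrow> y \<le> x \<longrightarrow> y \<in> L)"

definition ord_topology :: "'a::linorder set \<Rightarrow> 'a topology" where
  "ord_topology L = topology_generated_by
     ({L} \<union> (\<lambda>a. {y\<in>L. y < a}) ` L \<union> (\<lambda>a. {y\<in>L. a < y}) ` L)"

definition cf_omega :: "'a::linorder set \<Rightarrow> bool" where
  "cf_omega L \<longleftrightarrow> (\<exists>f::nat \<Rightarrow> 'a. (\<forall>k. f k \<in> L) \<and> strict_mono f \<and> (\<forall>x\<in>L. \<exists>k. x \<le> f k))"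

text \<open>Grid partition of L with respect to a finite F \<subseteq> L.
  [0,x1], [x_j+1, x_{j+1}] = {y. x_j < y \<le> x_{j+1}}, [x_N+1, .) = {y. x_N < y}.\<close>

definition grid1 :: "'a::wellorder set \<Rightarrow> 'a set \<Rightarrow> 'a set set" where
  "grid1 L F = (if F = {} then {L} else
     {{y\<in>L. y \<le> Min F}}
     \<union> {{y\<in>L. x < y \<and> y \<le> x'} | x x'. x \<in> F \<and> x' \<in> F \<and> x < x' \<and> \<not>(\<exists>z\<in>F. x < z \<and> z < x')}
     \<union> {{y\<in>L. Max F < y}})"

definition grid :: "nat \<Rightarrow> (nat \<Rightarrow> 'a::wellorder set) \<Rightarrow> (nat \<Rightarrow> 'a set) \<Rightarrow> (nat \<Rightarrow> 'a) set set" where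
  "grid n L F = {PiE {..<n} U | U. \<forall>i<n. U i \<in> grid1 (L i) (F i)}"

definition refines :: "'b set set \<Rightarrow> 'b set set \<Rightarrow> bool" where
  "refines G A \<longleftrightarrow> (\<forall>g\<in>G. \<exists>a\<in>A. g \<subseteq> a)"

definition finite_partition :: "'b set \<Rightarrow> 'b set set \<Rightarrow> bool" where
  "finite_partition X A \<longleftrightarrow> finite A \<and> \<Union>A = X \<and> {} \<notin> A \<and>
     (\<forall>a\<in>A. \<forall>b\<in>A. a \<noteq> b \<longrightarrow> a \<inter> b = {})"

end

theory Submission
  imports Defs "HOL-Library.Infinite_Set"
begin

lemma topspace_ord[simp]: "topspace (ord_topology L) = L"
  unfolding ord_topology_def by auto

lemma ord_open_limit:
  fixes L :: "'a::linorder set"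
  assumes "openin (ord_topology L) U"
  shows "\<forall>l\<in>U. \<forall>b. b < l \<longrightarrow> (\<forall>z. b \<le> z \<and> z < l \<longrightarrow> (\<exists>w. z < w \<and> w < l)) \<longrightarrow>
     (\<exists>c. b \<le> c \<and> c < l \<and> (\<forall>z\<in>L. c \<le> z \<and> z < l \<longrightarrow> z \<in> U))"
  using assms unfolding ord_topology_def openin_topology_generated_by_iff
proof (induction rule: generate_topology_on.induct)
  case Empty
  then show ?case by simp
next
  case (Int a b)
  show ?case
  proof (intro ballI allI impI)
    fix l b' assume l: "l \<in> a \<inter> b" and "b' < l" and lim: "\<forall>z. b' \<le> z \<and> z < l \<longrightarrow> (\<exists>w. z < w \<and> w < l)"
    have la: "l \<in> a" and lb: "l \<in> b" using l by auto
    obtain c1 where "b' \<le> c1" "c1 < l" "\<forall>z\<in>L. c1 \<le> z \<and> z < l \<longrightarrow> z \<in> a"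
      using Int.IH(1) la \<open>b' < l\<close> lim by blast
    moreover obtain c2 where "b' \<le> c2" "c2 < l" "\<forall>z\<in>L. c2 \<le> z \<and> z < l \<longrightarrow> z \<in> b"
      using Int.IH(2) lb \<open>b' < l\<close> lim by blast
    ultimately
    show "\<exists>c\<ge>b'. c < l \<and> (\<forall>z\<in>L. c \<le> z \<and> z < l \<longrightarrow> z \<in> a \<inter> b)"
      by (intro exI[of _ "max c1 c2"]) (auto simp: le_max_iff_disj)
  qed
next
  case (UN K)
  show ?case
  proof (intro ballI allI impI)
    fix l b' assume "l \<in> \<Union>K" and "b' < l" and lim: "\<forall>z. b' \<le> z \<and> z < l \<longrightarrow> (\<exists>w. z < w \<and> w < l)"
    then obtain k where k: "k \<in> K" "l \<in> k" by blast
    then obtain c where "b' \<le> c" "c < l" "\<forall>z\<in>L. c \<le> z \<and> z < l \<longrightarrow> z \<in> k"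
      using UN.IH[OF k(1)] \<open>b' < l\<close> lim by blast
    then show "\<exists>c\<ge>b'. c < l \<and> (\<forall>z\<in>L. c \<le> z \<and> z < l \<longrightarrow> z \<in> \<Union>K)"
      using k by blast
  qed
next
  case (Basis s)
  show ?case
  proof (intro ballI allI impI)
    fix l b' assume l: "l \<in> s" and bl: "b' < l" and lim: "\<forall>z. b' \<le> z \<and> z < l \<longrightarrow> (\<exists>w. z < w \<and> w < l)"
    from Basis consider "s = L" | a where "a \<in> L" "s = {y\<in>L. y < a}" | a where "a \<in> L" "s = {y\<in>L. a < y}"
      by auto
    then show "\<exists>c\<ge>b'. c < l \<and> (\<forall>z\<in>L. c \<le> z \<and> z < l \<longrightarrow> z \<in> s)"
    proof cases
      case 1 then show ?thesis using bl by auto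
    next
      case (2 a) then show ?thesis using bl l by (intro exI[of _ b']) auto
    next
      case (3 a)
      show ?thesis
      proof (cases "a < b'")
        case True then show ?thesis using 3 bl by (intro exI[of _ b']) auto
      next
        case False
        then have ba: "b' \<le> a" by simp
        have al: "a < l" using l 3 by simp
        obtain w where w: "a < w" "w < l" using lim ba al by blast
        have "\<forall>z\<in>L. w \<le> z \<and> z < l \<longrightarrow> z \<in> s" using 3 w by auto
        then show ?thesis using ba w by (intro exI[of _ w]) auto
      qed
    qed
  qed
qed

lemma dec_eventually_const:
  fixes g :: "nat \<Rightarrow> 'a::wellorder"
  assumes "\<forall>m. \<forall>n\<ge>m. g n \<le> g m"
  shows "\<exists>N. \<forall>k\<ge>N. g k = g N"
proof -
  obtain N where N: "g N = (LEAST x. x \<in> range g)"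
    by (metis (mono_tags, lifting) LeastI rangeE rangeI)
  have le: "\<forall>k. g N \<le> g k" unfolding N by (simp add: Least_le)
  have "\<forall>k\<ge>N. g k = g N"
  proof (intro allI impI)
    fix k assume "N \<le> k"
    then have "g k \<le> g N" using assms by blast
    then show "g k = g N" using le by (simp add: order_antisym)
  qed
  then show ?thesis by blast
qed

lemma cf_from_cofinal:
  fixes L :: "'a::linorder set" and g :: "nat \<Rightarrow> 'a"
  assumes nomax: "\<forall>x\<in>L. \<exists>y\<in>L. x < y" and gL: "\<forall>k. g k \<in> L"
    and cof: "\<forall>x\<in>L. \<exists>k. x \<le> g k"
  shows "cf_omega L"
proof -
  define f where "f = rec_nat (g 0) (\<lambda>k fk. SOME y. y \<in> L \<and> max fk (g (Suc k)) < y)"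
  have f0: "f 0 = g 0" and fS: "\<And>k. f (Suc k) = (SOME y. y \<in> L \<and> max (f k) (g (Suc k)) < y)"
    unfolding f_def by simp_all
  have *: "f k \<in> L \<and> g k \<le> f k" for k
  proof (induction k)
    case 0 then show ?case using gL f0 by simp
  next
    case (Suc k)
    have "max (f k) (g (Suc k)) \<in> L" using Suc gL by (simp add: max_def)
    then obtain y where "y \<in> L" "max (f k) (g (Suc k)) < y" using nomax by blast
    then have "f (Suc k) \<in> L \<and> max (f k) (g (Suc k)) < f (Suc k)"
      unfolding fS using someI[where P="\<lambda>y. y \<in> L \<and> max (f k) (g (Suc k)) < y" and x=y] by blast
    then show ?case by (auto intro: less_imp_le)
  qed
  have **: "f k < f (Suc k)" for k
  proof -
    have "max (f k) (g (Suc k)) \<in> L" using * gL by (simp add: max_def)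
    then obtain y where "y \<in> L" "max (f k) (g (Suc k)) < y" using nomax by blast
    then have "f (Suc k) \<in> L \<and> max (f k) (g (Suc k)) < f (Suc k)"
      unfolding fS using someI[where P="\<lambda>y. y \<in> L \<and> max (f k) (g (Suc k)) < y" and x=y] by blast
    then show ?thesis by simp
  qed
  have "strict_mono f" using ** by (simp add: strict_mono_Suc_iff)
  moreover have "\<forall>x\<in>L. \<exists>k. x \<le> f k" using cof * by (meson order_trans)
  ultimately show ?thesis unfolding cf_omega_def using * by blast
qed

lemma limitin_ev_const:
  assumes "l \<in> topspace T" "\<forall>k\<ge>N. g k = l"
  shows "limitin T g l sequentially"
  unfolding limitin_def eventually_sequentially using assms by auto

lemma mono_limit:
  fixes L :: "'a::wellorder set" and g :: "nat \<Rightarrow> 'a"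
  assumes seg: "ordinal_segment L" and ncf: "\<not> cf_omega L" and gL: "\<forall>k. g k \<in> L"
    and ms: "monoseq g"
  shows "\<exists>l\<in>L. limitin (ord_topology L) g l sequentially"
proof (cases "\<forall>m. \<forall>n\<ge>m. g n \<le> g m")
  case True
  then obtain N where N: "\<forall>k\<ge>N. g k = g N" using dec_eventually_const[OF True] by blast
  have gN: "g N \<in> topspace (ord_topology L)" unfolding topspace_ord using gL by blast
  have lim: "limitin (ord_topology L) g (g N) sequentially"
    by (rule limitin_ev_const[OF gN N])
  show ?thesis using lim gL by blast
next
  case False
  then have inc: "\<And>m n. m \<le> n \<Longrightarrow> g m \<le> g n" using ms unfolding monoseq_def by blast
  show ?thesis
  proof (cases "\<exists>x\<in>L. \<forall>k. g k \<le> x")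
    case False
    then have cof: "\<forall>x\<in>L. \<exists>k. x < g k" by (auto simp: not_le)
    have nomax: "\<forall>x\<in>L. \<exists>y\<in>L. x < y" using cof gL by blast
    have cof2: "\<forall>x\<in>L. \<exists>k. x \<le> g k" using cof by (blast intro: less_imp_le)
    have "cf_omega L" by (rule cf_from_cofinal[OF nomax gL cof2])
    then show ?thesis using ncf by simp
  next
    case True
    define l where "l = (LEAST x. x \<in> L \<and> (\<forall>k. g k \<le> x))"
    have lL: "l \<in> L" and gl: "\<forall>k. g k \<le> l"
      using LeastI_ex[of "\<lambda>x. x \<in> L \<and> (\<forall>k. g k \<le> x)"] True unfolding l_def by blast+
    have lleast: "\<And>x. x \<in> L \<Longrightarrow> \<forall>k. g k \<le> x \<Longrightarrow> l \<le> x"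
      unfolding l_def by (simp add: Least_le)
    show ?thesis
    proof (cases "\<exists>k. g k = l")
      case True
      then obtain N where N: "g N = l" by blast
      have "\<forall>k\<ge>N. g k = l"
      proof (intro allI impI)
        fix k assume "N \<le> k"
        then have "g N \<le> g k" using inc by blast
        then show "g k = l" using gl N by (simp add: order_antisym)
      qed
      moreover have lT: "l \<in> topspace (ord_topology L)" using lL by simp
      ultimately have "limitin (ord_topology L) g l sequentially"
        using limitin_ev_const[OF lT] by presburger
      then show ?thesis using lL by blast
    next
      case False
      then have gless: "\<forall>k. g k < l" using gl by (simp add: order_less_le)
      have sup: "\<exists>k. a < g k" if "a < l" for a
      proof (rule ccontr)
        assume "\<not> (\<exists>k. a < g k)"
        then have "\<forall>k. g k \<le> a" by (simp add: not_less)
        moreover have "a \<in> L" using seg lL that unfolding ordinal_segment_def by auto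
        ultimately have "l \<le> a" using lleast by blast
        then show False using that by simp
      qed
      have "limitin (ord_topology L) g l sequentially"
        unfolding limitin_def
      proof (intro conjI allI impI)
        show "l \<in> topspace (ord_topology L)" using lL by simp
        fix U assume U: "openin (ord_topology L) U \<and> l \<in> U"
        have lim: "\<forall>z. g 0 \<le> z \<and> z < l \<longrightarrow> (\<exists>w. z < w \<and> w < l)"
          using sup gless by blast
        have Uo: "openin (ord_topology L) U" and Ul: "l \<in> U" using U by auto
        have g0: "g 0 < l" using gless by blast
        obtain c where c: "c < l" "\<forall>z\<in>L. c \<le> z \<and> z < l \<longrightarrow> z \<in> U"
          using ord_open_limit[OF Uo, rule_format, OF Ul g0 lim[rule_format]] by blast
        obtain k0 where k0: "c < g k0" using sup c(1) by blast
        have "\<forall>k\<ge>k0. g k \<in> U"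
        proof (intro allI impI)
          fix k assume "k0 \<le> k"
          then have "g k0 \<le> g k" using inc by blast
          then have "c \<le> g k" using k0 by simp
          then show "g k \<in> U" using c gless gL by blast
        qed
        then show "\<forall>\<^sub>F x in sequentially. g x \<in> U" unfolding eventually_sequentially by blast
      qed
      then show ?thesis using lL by blast
    qed
  qed
qed

definition succ_in :: "'a::wellorder set \<Rightarrow> 'a \<Rightarrow> 'a" where
  "succ_in L x = (LEAST y. y \<in> L \<and> x < y)"

definition chg :: "nat \<Rightarrow> (nat \<Rightarrow> 'a::wellorder set) \<Rightarrow> (nat \<Rightarrow> 'a) set set \<Rightarrow> nat \<Rightarrow> 'a set" where
  "chg n L A i = {x \<in> L i. (\<exists>y\<in>L i. x < y) \<and>
     (\<exists>p \<in> PiE {..<n} L. \<not> (\<exists>a\<in>A. p(i:=x) \<in> a \<and> p(i:=succ_in (L i) x) \<in> a))}"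

lemma succ_in_props:
  assumes "y \<in> L" "x < y"
  shows "succ_in L x \<in> L" "x < succ_in L x" "succ_in L x \<le> y"
  using LeastI[of "\<lambda>y. y \<in> L \<and> x < y" y] Least_le[of "\<lambda>y. y \<in> L \<and> x < y" y] assms
  unfolding succ_in_def by auto

lemma succ_in_eq:
  assumes "y \<in> L" "x < y" "\<forall>w\<in>L. x < w \<longrightarrow> y \<le> w"
  shows "succ_in L x = y"
  unfolding succ_in_def using assms by (intro Least_equality) auto

lemma grid1_sub: "I \<in> grid1 L F \<Longrightarrow> I \<subseteq> L"
  unfolding grid1_def by (auto split: if_splits)

lemma grid1_convex:
  fixes L :: "'a::wellorder set"
  assumes "I \<in> grid1 L F" "x \<in> I" "y \<in> I" "x \<le> z" "z \<le> y" "z \<in> L"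
  shows "z \<in> I"
  using assms unfolding grid1_def
  by (auto split: if_splits dest: order.strict_trans2 order.trans)

lemma grid1_nochg:
  fixes L :: "'a::wellorder set"
  assumes "I \<in> grid1 L F" "finite F" "x \<in> I" "y \<in> I" "x < y"
  shows "x \<notin> F"
proof
  assume xF: "x \<in> F"
  then have ne: "F \<noteq> {}" by auto
  have mi: "Min F \<le> x" and ma: "x \<le> Max F" using xF assms(2) by auto
  from assms(1) ne consider "I = {y\<in>L. y \<le> Min F}"
    | u u' where "I = {y\<in>L. u < y \<and> y \<le> u'}" "u \<in> F" "u' \<in> F" "u < u'" "\<not>(\<exists>z\<in>F. u < z \<and> z < u')"
    | "I = {y\<in>L. Max F < y}"
    unfolding grid1_def by auto
  then show False
  proof cases
    case 1 then show ?thesis using assms mi by auto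
  next
    case 2 then show ?thesis using assms xF by fastforce
  next
    case 3 then show ?thesis using assms ma by auto
  qed
qed

lemma upd_in_X:
  assumes "q \<in> PiE {..<n} L" "i < n" "t \<in> L i"
  shows "q(i:=t) \<in> PiE {..<n} L"
  using assms by (auto simp: PiE_iff extensional_def)

lemma cont_upd:
  assumes "q \<in> PiE {..<n} L" "i < n"
  shows "continuous_map (ord_topology (L i)) (product_topology (\<lambda>i. ord_topology (L i)) {..<n}) (\<lambda>t. q(i:=t))"
  unfolding continuous_map_componentwise
proof (intro conjI ballI)
  show "(\<lambda>t. q(i := t)) ` topspace (ord_topology (L i)) \<subseteq> extensional {..<n}"
    using assms by (auto simp: PiE_iff extensional_def)
  fix k assume k: "k \<in> {..<n}"
  show "continuous_map (ord_topology (L i)) (ord_topology (L k)) (\<lambda>x. (q(i := x)) k)"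
  proof (cases "k = i")
    case True
    then show ?thesis by (simp add: continuous_map_id[unfolded id_def])
  next
    case False
    have "q k \<in> topspace (ord_topology (L k))" using assms k by (auto simp: PiE_iff)
    then show ?thesis using False by simp
  qed
qed

lemma line_core:
  fixes L :: "nat \<Rightarrow> 'a::wellorder set"
  assumes seg: "\<And>i. i<n \<Longrightarrow> ordinal_segment (L i)"
    and cover: "\<Union>A = PiE {..<n} L"
    and disj: "\<And>a b. a\<in>A \<Longrightarrow> b\<in>A \<Longrightarrow> a\<noteq>b \<Longrightarrow> a \<inter> b = {}"
    and opn: "\<And>a. a\<in>A \<Longrightarrow> openin (product_topology (\<lambda>i. ord_topology (L i)) {..<n}) a"
    and i: "i < n" and I: "I \<in> grid1 (L i) F" and Ff: "finite F" and FD: "F = chg n L A i"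
    and q: "q \<in> PiE {..<n} L" and qI: "q i \<in> I" and a: "a \<in> A" "q \<in> a"
  shows "y \<in> I \<Longrightarrow> q i \<le> y \<Longrightarrow> q(i:=y) \<in> a"
proof (induction y rule: less_induct)
  case (less y)
  have IL: "I \<subseteq> L i" using grid1_sub[OF I] .
  have yL: "y \<in> L i" using less.prems IL by auto
  show ?case
  proof (cases "y = q i")
    case True
    then show ?thesis using a by simp
  next
    case False
    then have xy: "q i < y" using less.prems by simp
    have inI: "z \<in> I" if "q i \<le> z" "z \<le> y" for z
    proof -
      have "z \<in> L i" using seg[OF i] yL that(2) unfolding ordinal_segment_def by blast
      then show ?thesis using grid1_convex[OF I qI less.prems(1) that] by blast
    qed
    show ?thesis
    proof (cases "\<forall>z. q i \<le> z \<and> z < y \<longrightarrow> (\<exists>w. z < w \<and> w < y)")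
      case False
      then obtain z where z: "q i \<le> z" "z < y" "\<not> (\<exists>w. z < w \<and> w < y)" by blast
      have zI: "z \<in> I" using inI z by simp
      have zL: "z \<in> L i" using zI IL by auto
      have "z \<notin> chg n L A i" using grid1_nochg[OF I Ff zI less.prems(1) z(2)] FD by simp
      then have nc: "\<forall>p \<in> PiE {..<n} L. \<exists>a\<in>A. p(i:=z) \<in> a \<and> p(i:=succ_in (L i) z) \<in> a"
        using zL yL z(2) unfolding chg_def by blast
      have nw: "\<forall>w\<in>L i. z < w \<longrightarrow> y \<le> w" using z(3) by (meson not_le)
      have sy: "succ_in (L i) z = y" by (rule succ_in_eq[OF yL z(2) nw])
      obtain a' where a': "a' \<in> A" "q(i:=z) \<in> a'" "q(i:=y) \<in> a'" using nc q sy by force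
      have "q(i:=z) \<in> a" using less.IH[OF z(2) zI z(1)] .
      then have "a' = a" using disj a' a by blast
      then show ?thesis using a' by blast
    next
      case True
      have qy: "q(i:=y) \<in> PiE {..<n} L" using upd_in_X[OF q i yL] .
      then obtain a' where a': "a' \<in> A" "q(i:=y) \<in> a'" using cover by blast
      define V where "V = {t \<in> topspace (ord_topology (L i)). q(i:=t) \<in> a'}"
      have Vo: "openin (ord_topology (L i)) V"
        unfolding V_def by (rule openin_continuous_map_preimage[OF cont_upd[OF q i] opn[OF a'(1)]])
      have yV: "y \<in> V" unfolding V_def using yL a' by simp
      obtain c where c: "q i \<le> c" "c < y" "\<forall>z\<in>L i. c \<le> z \<and> z < y \<longrightarrow> z \<in> V"
        using ord_open_limit[OF Vo, rule_format, OF yV xy True[rule_format]] by blast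
      have cL: "c \<in> L i" using seg[OF i] yL c(2) unfolding ordinal_segment_def by auto
      have "c \<in> V" using c cL by blast
      then have ca': "q(i:=c) \<in> a'" unfolding V_def by simp
      have "q(i:=c) \<in> a" using less.IH[OF c(2) inI[OF c(1) order.strict_implies_order[OF c(2)]] c(1)] .
      then have "a' = a" using disj a' a ca' by blast
      then show ?thesis using a' by blast
    qed
  qed
qed

lemma line:
  fixes L :: "nat \<Rightarrow> 'a::wellorder set"
  assumes seg: "\<And>i. i<n \<Longrightarrow> ordinal_segment (L i)"
    and cover: "\<Union>A = PiE {..<n} L"
    and disj: "\<And>a b. a\<in>A \<Longrightarrow> b\<in>A \<Longrightarrow> a\<noteq>b \<Longrightarrow> a \<inter> b = {}"
    and opn: "\<And>a. a\<in>A \<Longrightarrow> openin (product_topology (\<lambda>i. ord_topology (L i)) {..<n}) a"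
    and i: "i < n" and I: "I \<in> grid1 (L i) F" and Ff: "finite F" and FD: "F = chg n L A i"
    and q: "q \<in> PiE {..<n} L" and qI: "q i \<in> I" and a: "a \<in> A" "q \<in> a" and yI: "y \<in> I"
  shows "q(i:=y) \<in> a"
proof (cases "q i \<le> y")
  case True
  then show ?thesis using line_core[OF seg cover disj opn i I Ff FD q qI a yI] by blast
next
  case False
  have yL: "y \<in> L i" using yI grid1_sub[OF I] by auto
  have q': "q(i:=y) \<in> PiE {..<n} L" using upd_in_X[OF q i yL] .
  then obtain a' where a': "a' \<in> A" "q(i:=y) \<in> a'" using cover by blast
  have "(q(i:=y))(i:=q i) \<in> a'"
    using line_core[OF seg cover disj opn i I Ff FD q' _ a', of "q i"] yI qI False by simp
  then have "q \<in> a'" by simp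
  then have "a' = a" using disj a' a by blast
  then show ?thesis using a' by blast
qed

lemma box:
  fixes L :: "nat \<Rightarrow> 'a::wellorder set"
  assumes seg: "\<And>i. i<n \<Longrightarrow> ordinal_segment (L i)"
    and cover: "\<Union>A = PiE {..<n} L"
    and disj: "\<And>a b. a\<in>A \<Longrightarrow> b\<in>A \<Longrightarrow> a\<noteq>b \<Longrightarrow> a \<inter> b = {}"
    and opn: "\<And>a. a\<in>A \<Longrightarrow> openin (product_topology (\<lambda>i. ord_topology (L i)) {..<n}) a"
    and U: "\<And>i. i < n \<Longrightarrow> U i \<in> grid1 (L i) (chg n L A i)"
    and fin: "\<And>i. i < n \<Longrightarrow> finite (chg n L A i)"
    and p0: "p0 \<in> PiE {..<n} U" and p: "p \<in> PiE {..<n} U" and a: "a \<in> A" "p0 \<in> a"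
  shows "p \<in> a"
proof -
  have UL: "U j \<subseteq> L j" if "j < n" for j using grid1_sub[OF U[OF that]] .
  define r where "r m = (\<lambda>j. if j < m then p j else p0 j)" for m
  have rX: "r m \<in> PiE {..<n} L" for m
  proof -
    have "r m j \<in> L j" if j: "j < n" for j
    proof -
      have "p j \<in> U j" "p0 j \<in> U j" using p p0 j by (auto simp: PiE_mem)
      then show ?thesis using UL[OF j] unfolding r_def by auto
    qed
    moreover have "r m \<in> extensional {..<n}"
      using p p0 unfolding r_def by (auto simp: PiE_iff extensional_def)
    ultimately show ?thesis by (auto simp: PiE_iff)
  qed
  have "m \<le> n \<Longrightarrow> r m \<in> a" for m
  proof (induction m)
    case 0
    have "r 0 = p0" unfolding r_def by auto
    then show ?case using a by simp
  next
    case (Suc m)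
    then have mn: "m < n" by simp
    have eq: "r (Suc m) = (r m)(m := p m)" unfolding r_def by auto
    have "r m m \<in> U m" unfolding r_def using p0 mn by auto
    moreover have "p m \<in> U m" using p mn by auto
    ultimately have "(r m)(m := p m) \<in> a"
      using line[OF seg cover disj opn mn U[OF mn] fin[OF mn] refl rX _ a(1) Suc.IH] Suc.prems by simp
    then show ?case unfolding eq .
  qed
  then have rn: "r n \<in> a" by simp
  have "r n = p" unfolding r_def using p p0 by (auto simp: PiE_iff extensional_def)
  then show ?thesis using rn by simp
qed

lemma monoseq_comp_mono:
  assumes "monoseq g" "\<And>m n. m \<le> n \<Longrightarrow> f m \<le> f n"
  shows "monoseq (\<lambda>k. g (f k))"
  using assms(1) unfolding monoseq_def
proof
  assume "\<forall>m. \<forall>n\<ge>m. g m \<le> g n"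
  then have "\<forall>m. \<forall>n\<ge>m. g (f m) \<le> g (f n)" using assms(2) by blast
  then show "(\<forall>m. \<forall>n\<ge>m. g (f m) \<le> g (f n)) \<or> (\<forall>m. \<forall>n\<ge>m. g (f n) \<le> g (f m))" by blast
next
  assume "\<forall>m. \<forall>n\<ge>m. g n \<le> g m"
  then have "\<forall>m. \<forall>n\<ge>m. g (f n) \<le> g (f m)" using assms(2) by blast
  then show "(\<forall>m. \<forall>n\<ge>m. g (f m) \<le> g (f n)) \<or> (\<forall>m. \<forall>n\<ge>m. g (f n) \<le> g (f m))" by blast
qed

lemma multi_monosub:
  fixes s :: "nat \<Rightarrow> nat \<Rightarrow> 'a::linorder"
  shows "\<exists>h. strict_mono h \<and> (\<forall>j<m. monoseq (\<lambda>k. s (h k) j))"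
proof (induction m)
  case 0
  show ?case using strict_mono_id by blast
next
  case (Suc m)
  then obtain h where h: "strict_mono h" "\<forall>j<m. monoseq (\<lambda>k. s (h k) j)" by blast
  obtain f where f: "strict_mono f" "monoseq (\<lambda>k. s (h (f k)) m)"
    using seq_monosub[of "\<lambda>k. s (h k) m"] by blast
  have fm: "\<And>a b. a \<le> b \<Longrightarrow> f a \<le> f b" using f(1) by (simp add: strict_mono_less_eq)
  have "strict_mono (h \<circ> f)" using strict_mono_o[OF h(1) f(1)] .
  moreover have "\<forall>j<Suc m. monoseq (\<lambda>k. (s ((h \<circ> f) k) j))"
  proof (intro allI impI)
    fix j assume "j < Suc m"
    then consider "j < m" | "j = m" by linarith
    then show "monoseq (\<lambda>k. (s ((h \<circ> f) k) j))"
    proof cases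
      case 1
      then show ?thesis using monoseq_comp_mono[OF h(2)[rule_format, OF 1] fm] by (simp add: o_def)
    next
      case 2
      then show ?thesis using f(2) by (simp add: o_def)
    qed
  qed
  ultimately show ?case by blast
qed

lemma chg_finite:
  fixes L :: "nat \<Rightarrow> 'a::wellorder set"
  assumes seg: "\<And>i. i<n \<Longrightarrow> ordinal_segment (L i)"
    and ncf: "\<And>i. i<n \<Longrightarrow> \<not> cf_omega (L i)"
    and cover: "\<Union>A = PiE {..<n} L"
    and opn: "\<And>a. a\<in>A \<Longrightarrow> openin (product_topology (\<lambda>i. ord_topology (L i)) {..<n}) a"
    and i: "i < n"
  shows "finite (chg n L A i)"
proof (rule ccontr)
  define D where "D = chg n L A i"
  assume "infinite (chg n L A i)"
  then have inf: "infinite D" unfolding D_def .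
  define d where "d k = enumerate D k" for k
  have dD: "d k \<in> D" for k using enumerate_in_set[OF inf] unfolding d_def .
  have dmono: "k < k' \<Longrightarrow> d k < d k'" for k k' using enumerate_mono[OF _ inf] unfolding d_def .
  have dD': "d k \<in> L i \<and> (\<exists>y\<in>L i. d k < y) \<and>
     (\<exists>p \<in> PiE {..<n} L. \<not> (\<exists>a\<in>A. p(i:=d k) \<in> a \<and> p(i:=succ_in (L i) (d k)) \<in> a))" for k
    using dD[of k] unfolding D_def chg_def mem_Collect_eq .
  have "\<forall>k. \<exists>p. p \<in> PiE {..<n} L \<and> \<not> (\<exists>a\<in>A. p(i:=d k) \<in> a \<and> p(i:=succ_in (L i) (d k)) \<in> a)"
  proof
    fix k
    from dD'[of k] obtain p where "p \<in> PiE {..<n} L" "\<not> (\<exists>a\<in>A. p(i:=d k) \<in> a \<and> p(i:=succ_in (L i) (d k)) \<in> a)"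
      by (elim conjE bexE)
    then show "\<exists>p. p \<in> PiE {..<n} L \<and> \<not> (\<exists>a\<in>A. p(i:=d k) \<in> a \<and> p(i:=succ_in (L i) (d k)) \<in> a)"
      by (intro exI conjI)
  qed
  from choice[OF this] obtain p where
    p0: "\<forall>k. p k \<in> PiE {..<n} L \<and> \<not> (\<exists>a\<in>A. (p k)(i:=d k) \<in> a \<and> (p k)(i:=succ_in (L i) (d k)) \<in> a)"
    by (elim exE)
  have p: "\<And>k. p k \<in> PiE {..<n} L" "\<And>k. \<not> (\<exists>a\<in>A. (p k)(i:=d k) \<in> a \<and> (p k)(i:=succ_in (L i) (d k)) \<in> a)"
    using p0 by blast+
  define s where "s k = succ_in (L i) (d k)" for k
  have dL: "d k \<in> L i" for k using dD'[of k] by (rule conjunct1)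
  have sprops: "s k \<in> L i \<and> d k < s k" for k
  proof -
    obtain y where y: "y \<in> L i" "d k < y" using dD'[of k] by (elim conjE bexE)
    show ?thesis unfolding s_def using succ_in_props(1,2)[OF y] by (intro conjI)
  qed
  have sd: "s k \<le> d k'" if "k < k'" for k k'
    unfolding s_def using succ_in_props(3)[OF dL dmono[OF that]] .
  define P where "P k = (p k)(i := d k)" for k
  define P' where "P' k = (p k)(i := s k)" for k
  have PX: "P k \<in> PiE {..<n} L" for k unfolding P_def using upd_in_X[OF p(1) i dL] .
  have P'X: "P' k \<in> PiE {..<n} L" for k unfolding P'_def using upd_in_X[OF p(1) i] sprops by blast
  obtain h where h: "strict_mono h" "\<forall>j<n. monoseq (\<lambda>k. P (h k) j)"
    using multi_monosub[where s=P and m=n] by blast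
  define r where "r m = (if even m then P (h (m div 2)) else P' (h (m div 2)))" for m
  have rX: "r m \<in> PiE {..<n} L" for m unfolding r_def using PX P'X by simp
  have rmono: "monoseq (\<lambda>m. r m j)" if j: "j < n" for j
  proof (cases "j = i")
    case False
    have "(\<lambda>m. r m j) = (\<lambda>m. P (h (m div 2)) j)"
      unfolding r_def P_def P'_def using False by auto
    moreover have "monoseq (\<lambda>m. P (h (m div 2)) j)"
      using monoseq_comp_mono[OF h(2)[rule_format, OF j], of "\<lambda>m. m div 2"] by (simp add: div_le_mono)
    ultimately show ?thesis by simp
  next
    case True
    have "r m i \<le> r (Suc m) i" for m
    proof (cases "even m")
      case True
      then have "Suc m div 2 = m div 2" by presburger
      then show ?thesis unfolding r_def P_def P'_def using True sprops by (auto intro: less_imp_le)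
    next
      case False
      then have e: "Suc m div 2 = Suc (m div 2)" by presburger
      have "h (m div 2) < h (Suc (m div 2))" using h(1) by (simp add: strict_mono_def)
      then have "s (h (m div 2)) \<le> d (h (Suc (m div 2)))" by (rule sd)
      then show ?thesis unfolding r_def P_def P'_def using False e by auto
    qed
    then show ?thesis unfolding True monoseq_Suc by blast
  qed
  have "\<forall>j. \<exists>l. j < n \<longrightarrow> l \<in> L j \<and> limitin (ord_topology (L j)) (\<lambda>m. r m j) l sequentially"
  proof
    fix j
    show "\<exists>l. j < n \<longrightarrow> l \<in> L j \<and> limitin (ord_topology (L j)) (\<lambda>m. r m j) l sequentially"
    proof (cases "j < n")
      case True
      have "\<forall>m. r m j \<in> L j" using rX True by (auto simp: PiE_mem)
      then show ?thesis using mono_limit[OF seg[OF True] ncf[OF True] _ rmono[OF True]] by blast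
    qed simp
  qed
  from choice[OF this] obtain l where
    l: "\<And>j. j < n \<Longrightarrow> l j \<in> L j \<and> limitin (ord_topology (L j)) (\<lambda>m. r m j) (l j) sequentially"
    by blast
  define q where "q = restrict l {..<n}"
  have limq: "limitin (product_topology (\<lambda>i. ord_topology (L i)) {..<n}) r q sequentially"
    unfolding limitin_componentwise
  proof (intro conjI ballI)
    show "q \<in> extensional {..<n}" unfolding q_def by simp
    show "\<forall>\<^sub>F a in sequentially. r a \<in> topspace (product_topology (\<lambda>i. ord_topology (L i)) {..<n})"
      using rX by simp
    fix j assume "j \<in> {..<n}"
    then show "limitin (ord_topology (L j)) (\<lambda>c. r c j) (q j) sequentially"
      using l unfolding q_def by simp
  qed
  then have qX: "q \<in> PiE {..<n} L" unfolding limitin_def by simp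
  then obtain a where a: "a \<in> A" "q \<in> a" using cover by blast
  have "\<forall>\<^sub>F m in sequentially. r m \<in> a" using limq opn[OF a(1)] a(2) unfolding limitin_def by blast
  then obtain N where N: "\<And>m. m \<ge> N \<Longrightarrow> r m \<in> a" unfolding eventually_sequentially by blast
  have "r (2*N) \<in> a" "r (2*N+1) \<in> a" using N by auto
  moreover have "r (2*N) = P (h N)" "r (2*N+1) = P' (h N)" unfolding r_def by auto
  ultimately have "P (h N) \<in> a" "P' (h N) \<in> a" by auto
  then show False using p(2)[of "h N"] a(1) unfolding P_def P'_def s_def by blast
qed

theorem theorem5p8:
  fixes n :: nat and L :: "nat \<Rightarrow> 'a::wellorder set" and \<A> :: "(nat \<Rightarrow> 'a) set set"
  assumes ord: "\<And>i. i < n \<Longrightarrow> ordinal_segment (L i)"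
    and nonzero: "\<And>i. i < n \<Longrightarrow> L i \<noteq> {}"
    and cf: "\<And>i. i < n \<Longrightarrow> \<not> cf_omega (L i)"
    and part: "finite_partition (topspace (product_topology (\<lambda>i. ord_topology (L i)) {..<n})) \<A>"
    and clopen: "\<And>a. a \<in> \<A> \<Longrightarrow>
        closedin (product_topology (\<lambda>i. ord_topology (L i)) {..<n}) a \<and>
        openin (product_topology (\<lambda>i. ord_topology (L i)) {..<n}) a"
  shows "\<exists>F. (\<forall>i<n. finite (F i) \<and> F i \<subseteq> L i) \<and> refines (grid n L F) \<A>"
proof -
  have top: "topspace (product_topology (\<lambda>i. ord_topology (L i)) {..<n}) = PiE {..<n} L"
    by (simp only: topspace_product_topology topspace_ord)
  have pp: "finite \<A> \<and> \<Union>\<A> = topspace (product_topology (\<lambda>i. ord_topology (L i)) {..<n}) \<and> {} \<notin> \<A> \<and>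
     (\<forall>a\<in>\<A>. \<forall>b\<in>\<A>. a \<noteq> b \<longrightarrow> a \<inter> b = {})" using part unfolding finite_partition_def .
  have cover: "\<Union>\<A> = PiE {..<n} L" using conjunct1[OF conjunct2[OF pp]] unfolding top .
  have dd: "\<forall>a\<in>\<A>. \<forall>b\<in>\<A>. a \<noteq> b \<longrightarrow> a \<inter> b = {}" using pp by (elim conjE)
  have disj: "\<And>a b. a\<in>\<A> \<Longrightarrow> b\<in>\<A> \<Longrightarrow> a\<noteq>b \<Longrightarrow> a \<inter> b = {}"
    using dd by blast
  have opn: "\<And>a. a\<in>\<A> \<Longrightarrow> openin (product_topology (\<lambda>i. ord_topology (L i)) {..<n}) a"
    using clopen by blast
  define F where "F = chg n L \<A>"
  have fin: "\<And>i. i < n \<Longrightarrow> finite (chg n L \<A> i)"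
    by (rule chg_finite[OF ord cf cover opn])
  have sub: "F i \<subseteq> L i" for i unfolding F_def chg_def by (rule Collect_subset)
  have "refines (grid n L F) \<A>"
    unfolding refines_def
  proof
    fix g assume "g \<in> grid n L F"
    then obtain U where g: "g = PiE {..<n} U" and U: "\<And>i. i < n \<Longrightarrow> U i \<in> grid1 (L i) (chg n L \<A> i)"
      unfolding grid_def F_def by blast
    show "\<exists>a\<in>\<A>. g \<subseteq> a"
    proof (cases "g = {}")
      case True
      have "PiE {..<n} L \<noteq> {}" using nonzero by (simp add: PiE_eq_empty_iff)
      then obtain x where "x \<in> PiE {..<n} L" by blast
      then obtain a where "a \<in> \<A>" using cover by blast
      then show ?thesis using True by blast
    next
      case False
      then obtain p0 where p0: "p0 \<in> PiE {..<n} U" using g by blast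
      have "p0 \<in> PiE {..<n} L"
        using p0 grid1_sub[OF U] by (auto simp: PiE_iff)
      then obtain a where a: "a \<in> \<A>" "p0 \<in> a" using cover by blast
      have "g \<subseteq> a"
      proof
        fix p assume "p \<in> g"
        then have "p \<in> PiE {..<n} U" using g by simp
        then show "p \<in> a" using box[OF ord cover disj opn U fin p0 _ a] by blast
      qed
      then show ?thesis using a by blast
    qed
  qed
  moreover have "\<forall>i<n. finite (F i) \<and> F i \<subseteq> L i" using fin sub unfolding F_def by blast
  ultimately show ?thesis by blast
qed

end
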